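(* Let $4\le\beta\le n-2$ and let $\gamma_1,\gamma_2,\gamma_3,\gamma_4$ be positive integers with $\gamma_1+\gamma_2+\gamma_3+\gamma_4<n$ such that $\gamma_i\ge 2$ for some $i\in\{1,2,3,4\}$. Then $\mathcal T_{(n),(\beta),(\gamma_1,\gamma_2,\gamma_3,\gamma_4)}$ has infinitely many $G$-orbits.
   Context: $\mathbb F$ is an infinite field of characteristic $\ne 2$. Equip $\mathbb F^{2n}$ (canonical basis $e_1,\ldots,e_{2n}$) with the symmetric bilinear form $(e_i,e_j)=\delta_{i,2n+1-j}$, and let $G={\rm O}_{2n}(\mathbb F)$ be its isometry group. A subspace $V$ is isotropic if $(V,V)=\{0\}$. For a sequence ${\bf a}=(\alpha_1,\ldots,\alpha_p)$ of positive integers with $\sum\alpha_j\le n$, $M_{\bf a}$ is the set of flags $V_1\subset\cdots\subset V_p$ in $\mathbb F^{2n}$ with $\dim V_j=\alpha_1+\cdots+\alpha_j$ and $V_p$ isotropic. $\mathcal T_{{\bf a},{\bf b},{\bf c}}=M_{\bf a}\times M_{\bf b}\times M_{\bf c}$ with the diagonal $G$-action. *)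

theory Defs
  imports Complex_Main "HOL-Library.Function_Algebras"
begin

text \<open>The space F^(2n) is modelled as the functions nat => F vanishing outside {..<2n};
  the canonical basis vector e_(i+1) is the indicator of index i (0-based).\<close>

definition Vsp :: "nat \<Rightarrow> (nat \<Rightarrow> 'a::field) set" where
  "Vsp n = {v. \<forall>i\<ge>2*n. v i = 0}"

definition scl :: "'a::field \<Rightarrow> (nat \<Rightarrow> 'a) \<Rightarrow> nat \<Rightarrow> 'a" where
  "scl c v = (\<lambda>i. c * v i)"

text \<open>(e_i, e_j) = delta_(i, 2n+1-j), i.e. 0-based index i pairs with 2n-1-i.\<close>
definition bform :: "nat \<Rightarrow> (nat \<Rightarrow> 'a::field) \<Rightarrow> (nat \<Rightarrow> 'a) \<Rightarrow> 'a" where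
  "bform n u v = (\<Sum>i<2*n. u i * v (2*n - 1 - i))"

definition is_subspace :: "nat \<Rightarrow> (nat \<Rightarrow> 'a::field) set \<Rightarrow> bool" where
  "is_subspace n V \<longleftrightarrow> Modules.module.subspace scl V \<and> V \<subseteq> Vsp n"

definition sdim :: "(nat \<Rightarrow> 'a::field) set \<Rightarrow> nat" where
  "sdim V = Vector_Spaces.vector_space.dim scl V"

definition isotropic :: "nat \<Rightarrow> (nat \<Rightarrow> 'a::field) set \<Rightarrow> bool" where
  "isotropic n V \<longleftrightarrow> (\<forall>u\<in>V. \<forall>v\<in>V. bform n u v = 0)"

definition flags :: "nat \<Rightarrow> nat list \<Rightarrow> (nat \<Rightarrow> 'a::field) set list set" where
  "flags n a = {Vs. length Vs = length a
     \<and> (\<forall>j<length a. is_subspace n (Vs ! j) \<and> sdim (Vs ! j) = sum_list (take (Suc j) a))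
     \<and> (\<forall>j. Suc j < length a \<longrightarrow> Vs ! j \<subseteq> Vs ! Suc j)
     \<and> (a \<noteq> [] \<longrightarrow> isotropic n (last Vs))}"

definition orth_group :: "nat \<Rightarrow> ((nat \<Rightarrow> 'a::field) \<Rightarrow> (nat \<Rightarrow> 'a)) set" where
  "orth_group n = {g. Vector_Spaces.linear scl scl g \<and> bij_betw g (Vsp n) (Vsp n)
     \<and> (\<forall>u\<in>Vsp n. \<forall>v\<in>Vsp n. bform n (g u) (g v) = bform n u v)}"

definition triple_space :: "nat \<Rightarrow> nat list \<Rightarrow> nat list \<Rightarrow> nat list
    \<Rightarrow> ((nat \<Rightarrow> 'a::field) set list \<times> (nat \<Rightarrow> 'a) set list \<times> (nat \<Rightarrow> 'a) set list) set" where
  "triple_space n a b c = flags n a \<times> flags n b \<times> flags n c"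

definition act :: "((nat \<Rightarrow> 'a) \<Rightarrow> (nat \<Rightarrow> 'a))
    \<Rightarrow> (nat \<Rightarrow> 'a) set list \<times> (nat \<Rightarrow> 'a) set list \<times> (nat \<Rightarrow> 'a) set list
    \<Rightarrow> (nat \<Rightarrow> 'a) set list \<times> (nat \<Rightarrow> 'a) set list \<times> (nat \<Rightarrow> 'a) set list" where
  "act g x = (case x of (A, B, C) \<Rightarrow> (map ((`) g) A, map ((`) g) B, map ((`) g) C))"

definition orbit :: "nat \<Rightarrow> (nat \<Rightarrow> 'a::field) set list \<times> (nat \<Rightarrow> 'a) set list \<times> (nat \<Rightarrow> 'a) set list
    \<Rightarrow> ((nat \<Rightarrow> 'a) set list \<times> (nat \<Rightarrow> 'a) set list \<times> (nat \<Rightarrow> 'a) set list) set" where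
  "orbit n x = {act g x | g. g \<in> orth_group n}"

end

theory Submission
  imports Defs
begin


interpretation fv: vector_space "scl :: 'a::field \<Rightarrow> (nat \<Rightarrow> 'a) \<Rightarrow> nat \<Rightarrow> 'a"
  by unfold_locales (auto simp: scl_def fun_eq_iff algebra_simps)

lemma scl_apply: "scl c v i = c * v i" by (simp add: scl_def)

lemma sdim_eq: "sdim = (fv.dim :: (nat \<Rightarrow> 'a::field) set \<Rightarrow> nat)" by (simp add: sdim_def fun_eq_iff)

definition ind :: "nat \<Rightarrow> nat \<Rightarrow> 'a::field" where "ind j = (\<lambda>i. if i = j then 1 else 0)"
lemma ind_apply[simp]: "ind j i = (if i = j then 1 else 0)" by (simp add: ind_def)

lemma bform_add1: "bform n (u + v) w = bform n u w + bform n v w"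
  by (simp add: bform_def sum.distrib distrib_right)
lemma bform_diff1: "bform n (u - v) w = bform n u w - bform n v w"
  by (simp add: bform_def sum_subtractf left_diff_distrib)
lemma bform_scl1: "bform n (scl c u) w = c * bform n u w"
  by (simp add: bform_def sum_distrib_left mult.assoc scl_apply)
lemma bform_zero1: "bform n 0 w = 0"
  by (simp add: bform_def)

lemma bform_sym: "bform n u v = bform n v (u :: nat \<Rightarrow> 'a::field)"
  unfolding bform_def
  by (rule sum.reindex_bij_witness[of _ "\<lambda>i. 2*n-1-i" "\<lambda>i. 2*n-1-i"]) (auto simp: mult.commute)

lemma bform_add2: "bform n w (u + v) = bform n w u + bform n w v"
  using bform_add1 bform_sym by metis
lemma bform_diff2: "bform n w (u - v) = bform n w u - bform n w v"
  using bform_diff1 bform_sym by metis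
lemma bform_scl2: "bform n w (scl c u) = c * bform n w u"
  using bform_scl1 bform_sym by metis

lemma bform_ind1: "j < 2*n \<Longrightarrow> bform n (ind j) w = w (2*n - 1 - j)"
proof -
  assume j: "j < 2*n"
  have "bform n (ind j) w = (\<Sum>i<2*n. if i = j then w (2*n - 1 - i) else 0)"
    unfolding bform_def by (rule sum.cong) auto
  also have "\<dots> = w (2*n-1-j)" using j by (simp add: sum.delta)
  finally show ?thesis .
qed
lemma bform_ind2: "j < 2*n \<Longrightarrow> bform n w (ind j) = w (2*n - 1 - j)"
  using bform_ind1 bform_sym by metis

lemma subspace_coord: "fv.subspace {v::nat\<Rightarrow>'a::field. \<forall>j\<in>K. v j = 0}"
  by (auto simp: fv.subspace_def scl_apply)

lemma span_coord: "(\<forall>x\<in>B. \<forall>j\<in>K. x j = 0) \<Longrightarrow> v \<in> fv.span B \<Longrightarrow> \<forall>j\<in>K. (v::nat\<Rightarrow>'a::field) j = 0"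
  using fv.span_minimal[OF _ subspace_coord, of B K] by blast

lemma Vsp_eq: "Vsp n = {v. \<forall>j\<in>{2*n..}. v j = 0}" by (auto simp: Vsp_def)
lemma Vsp_subspace: "fv.subspace (Vsp n)" unfolding Vsp_eq by (rule subspace_coord)

lemma indep_cons:
  assumes "fv.independent (set xs)" "distinct xs" "x k \<noteq> 0" "\<forall>y\<in>set xs. (y::nat\<Rightarrow>'a::field) k = 0"
  shows "fv.independent (set (x#xs)) \<and> distinct (x#xs)"
proof -
  have "x \<notin> fv.span (set xs)"
    using span_coord[of "set xs" "{k}"] assms(3,4) by auto
  moreover have "x \<notin> set xs" using calculation fv.span_base by blast
  ultimately show ?thesis using assms(1,2) fv.independent_insert[of x "set xs"] by simp
qed

fun tri :: "(nat \<Rightarrow> 'a::field) list \<Rightarrow> bool" where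
  "tri [] = True"
| "tri (x#xs) = ((\<exists>k. x k \<noteq> 0 \<and> (\<forall>y\<in>set xs. y k = 0)) \<and> tri xs)"

lemma tri_indep: "tri xs \<Longrightarrow> fv.independent (set xs) \<and> distinct xs"
proof (induction xs)
  case Nil then show ?case by (simp add: fv.independent_empty)
next
  case (Cons x xs)
  then obtain k where "x k \<noteq> 0" "\<forall>y\<in>set xs. y k = 0" "tri xs" by auto
  with Cons.IH show ?case using indep_cons by blast
qed



lemma tri_inds: "distinct ks \<Longrightarrow> (\<forall>k\<in>set ks. \<forall>y\<in>set ys. y k = 0) \<Longrightarrow> tri ys \<Longrightarrow> tri (map ind ks @ ys)"
proof (induction ks)
  case Nil then show ?case by simp
next
  case (Cons k ks)
  then show ?case by (auto intro!: exI[of _ k])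
qed




definition vv :: "nat \<Rightarrow> 'a::field \<Rightarrow> nat \<Rightarrow> 'a" where
  "vv n t = scl t (ind 0) + ind 2 + scl t (ind (2*n-4)) + ind n"
definition dd :: "nat \<Rightarrow> nat \<Rightarrow> 'a::field" where "dd n = ind (2*n-1) - ind 1 + ind (n+1) - ind 3"
definition cp :: "nat \<Rightarrow> nat \<Rightarrow> 'a::field" where "cp n = ind 2 + ind (n-2) + ind (2*n-4)"
definition cb :: "nat \<Rightarrow> nat \<Rightarrow> 'a::field" where "cb n = ind 0 + ind (2*n-2)"
definition zz :: "nat \<Rightarrow> nat \<Rightarrow> 'a::field" where "zz n = ind (2*n-2) + ind (n-2)"
definition pp :: "nat \<Rightarrow> nat \<Rightarrow> 'a::field" where "pp n = ind 2 + ind (n-2)"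
definition fil :: "nat \<Rightarrow> nat \<Rightarrow> nat \<Rightarrow> 'a::field" where "fil n r = ind (2*n-4-r)"

lemma vv_apply: "vv n t j = (if j = 0 then t else 0) + (if j = 2 then 1 else 0) + (if j = 2*n-4 then t else 0) + (if j = n then 1 else 0)"
  by (simp add: vv_def scl_apply)
lemma dd_apply: "dd n j = (if j = 2*n-1 then 1 else 0) - (if j = 1 then 1 else 0) + (if j = n+1 then 1 else 0) - (if j = 3 then 1 else 0)"
  by (simp add: dd_def)
lemma cp_apply: "cp n j = (if j = 2 then 1 else 0) + (if j = n-2 then 1 else 0) + (if j = 2*n-4 then 1 else 0)"
  by (simp add: cp_def)
lemma cb_apply: "cb n j = (if j = 0 then 1 else 0) + (if j = 2*n-2 then 1 else 0)"
  by (simp add: cb_def)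
lemma zz_apply: "zz n j = (if j = 2*n-2 then 1 else 0) + (if j = n-2 then 1 else 0)"
  by (simp add: zz_def)
lemma pp_apply: "pp n j = (if j = 2 then 1 else 0) + (if j = n-2 then 1 else 0)"
  by (simp add: pp_def)
lemma fil_apply: "fil n r j = (if j = 2*n-4-r then 1 else 0)"
  by (simp add: fil_def)

lemmas vec_apply = vv_apply dd_apply cp_apply cb_apply zz_apply pp_apply fil_apply

definition Qc :: "nat list \<Rightarrow> nat \<Rightarrow> nat \<Rightarrow> nat" where
  "Qc gs i k = sum_list (take k gs) - k - (if i \<le> k then 1 else 0)"

definition core :: "nat \<Rightarrow> 'a::field \<Rightarrow> nat \<Rightarrow> nat \<Rightarrow> (nat \<Rightarrow> 'a) set" where
  "core n t i k = {x. (x = vv n t \<and> 1 \<le> k) \<or> (x = cp n \<and> 2 \<le> k) \<or> (x = cb n \<and> 3 \<le> k)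
                    \<or> (x = zz n \<and> 4 \<le> k) \<or> (x = dd n \<and> i \<le> k)}"
definition Gen :: "nat \<Rightarrow> 'a::field \<Rightarrow> nat \<Rightarrow> nat list \<Rightarrow> nat \<Rightarrow> (nat \<Rightarrow> 'a) set" where
  "Gen n t i gs k = core n t i k \<union> fil n ` {1..Qc gs i k}"
definition Cc :: "nat \<Rightarrow> 'a::field \<Rightarrow> nat \<Rightarrow> nat list \<Rightarrow> nat \<Rightarrow> (nat \<Rightarrow> 'a) set" where
  "Cc n t i gs k = fv.span (Gen n t i gs k)"

definition Ceq :: "nat \<Rightarrow> 'a::field \<Rightarrow> nat \<Rightarrow> nat \<Rightarrow> (nat \<Rightarrow> 'a) \<Rightarrow> bool" where
 "Ceq n t i k c \<longleftrightarrow> c 1 = - c (2*n-1) \<and> c 3 = - c (2*n-1) \<and> c (n+1) = c (2*n-1) \<and> c (n-1) = 0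
   \<and> c (2*n-3) = 0 \<and> (\<forall>j. 4 \<le> j \<and> j < n-2 \<longrightarrow> c j = 0) \<and> c (2*n-4) = t * c n + c 2 - c n
   \<and> c (2*n-2) = c 0 - t * c n + c (n-2) - c 2 + c n \<and> (k < i \<longrightarrow> c (2*n-1) = 0)
   \<and> (k < 2 \<longrightarrow> c 2 = c n) \<and> (k < 3 \<longrightarrow> c 0 = t * c n) \<and> (k < 4 \<longrightarrow> c (n-2) = c 2 - c n)"

lemma Ceq_subspace: "fv.subspace {c. Ceq n t i k c}"
proof -
  have add: "Ceq n t i k (x + y)" if "Ceq n t i k x" "Ceq n t i k y" for x y
    using that unfolding Ceq_def by clarsimp (simp add: algebra_simps)
  have scl: "Ceq n t i k (scl a x)" if "Ceq n t i k x" for a x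
    using that unfolding Ceq_def by (clarsimp simp: scl_apply) (simp add: algebra_simps)
  have zero: "Ceq n t i k 0" by (simp add: Ceq_def)
  show ?thesis unfolding fv.subspace_def using add scl zero by auto
qed

lemma Ceq_vv: assumes "6 \<le> n" "1 \<le> k" shows "Ceq n t i k (vv n t)"
proof -
  obtain N where n: "n = N + 6" using assms(1) by (metis add.commute le_Suc_ex)
  show ?thesis using assms(2) unfolding Ceq_def n by (simp add: vv_apply)
qed

lemma Ceq_dd: assumes "6 \<le> n" "i \<le> k" shows "Ceq n t i k (dd n)"
proof -
  obtain N where n: "n = N + 6" using assms(1) by (metis add.commute le_Suc_ex)
  show ?thesis using assms(2) unfolding Ceq_def n by (simp add: dd_apply)
qed
lemma Ceq_cp: assumes "6 \<le> n" "2 \<le> k" shows "Ceq n t i k (cp n)"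
proof -
  obtain N where n: "n = N + 6" using assms(1) by (metis add.commute le_Suc_ex)
  show ?thesis using assms(2) unfolding Ceq_def n by (simp add: cp_apply)
qed
lemma Ceq_cb: assumes "6 \<le> n" "3 \<le> k" shows "Ceq n t i k (cb n)"
proof -
  obtain N where n: "n = N + 6" using assms(1) by (metis add.commute le_Suc_ex)
  show ?thesis using assms(2) unfolding Ceq_def n by (simp add: cb_apply)
qed
lemma Ceq_zz: assumes "6 \<le> n" "4 \<le> k" shows "Ceq n t i k (zz n)"
proof -
  obtain N where n: "n = N + 6" using assms(1) by (metis add.commute le_Suc_ex)
  show ?thesis using assms(2) unfolding Ceq_def n by (simp add: zz_apply)
qed
lemma Ceq_ind: assumes "n + 2 \<le> c" "c + 5 \<le> 2*n" shows "Ceq n t i k (ind c)"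
  using assms unfolding Ceq_def by auto arith

lemma Ceq_fil: assumes "6 \<le> n" "1 \<le> r" "r \<le> n - 6" shows "Ceq n t i k (fil n r)"
  unfolding fil_def by (rule Ceq_ind) (use assms in auto)

lemma Gen_Ceq:
  assumes n6: "6 \<le> n" and Q: "Qc gs i k \<le> n - 6" and x: "x \<in> Gen n t i gs k"
  shows "Ceq n t i k x"
  using x Q unfolding Gen_def core_def
  by (auto intro: Ceq_vv Ceq_dd Ceq_cp Ceq_cb Ceq_zz Ceq_fil n6)

lemma Cc_Ceq:
  assumes n6: "6 \<le> n" and Q: "Qc gs i k \<le> n - 6" and x: "x \<in> Cc n t i gs k"
  shows "Ceq n t i k x"
  using fv.span_minimal[OF _ Ceq_subspace, of "Gen n t i gs k" n t i k] Gen_Ceq[OF n6 Q] x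
  unfolding Cc_def by blast




lemma n6_cases: "6 \<le> (n::nat) \<Longrightarrow> \<exists>N. n = N + 6" by presburger

lemma bform_vv: assumes "6 \<le> n" shows "bform n (vv n t) y = t * y (2*n-1) + y (2*n-3) + t * y 3 + y (n-1)"
proof -
  obtain N where n: "n = N + 6" using assms n6_cases by blast
  show ?thesis unfolding vv_def n by (simp add: bform_add1 bform_scl1 bform_ind1 ac_simps)
qed
lemma bform_dd: assumes "6 \<le> n" shows "bform n (dd n) y = y 0 - y (2*n-2) + y (n-2) - y (2*n-4)"
proof -
  obtain N where n: "n = N + 6" using assms n6_cases by blast
  show ?thesis unfolding dd_def n by (simp add: bform_add1 bform_diff1 bform_ind1 ac_simps)
qed
lemma bform_cp: assumes "6 \<le> n" shows "bform n (cp n) y = y (2*n-3) + y (n+1) + y 3"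
proof -
  obtain N where n: "n = N + 6" using assms n6_cases by blast
  show ?thesis unfolding cp_def n by (simp add: bform_add1 bform_ind1 ac_simps)
qed
lemma bform_cb: assumes "6 \<le> n" shows "bform n (cb n) y = y (2*n-1) + y 1"
proof -
  obtain N where n: "n = N + 6" using assms n6_cases by blast
  show ?thesis unfolding cb_def n by (simp add: bform_add1 bform_ind1 ac_simps)
qed
lemma bform_zz: assumes "6 \<le> n" shows "bform n (zz n) y = y 1 + y (n+1)"
proof -
  obtain N where n: "n = N + 6" using assms n6_cases by blast
  show ?thesis unfolding zz_def n by (simp add: bform_add1 bform_ind1 ac_simps)
qed
lemma bform_fil: assumes "6 \<le> n" "r \<le> n - 6" shows "bform n (fil n r) y = y (r + 3)"
proof -
  obtain N where n: "n = N + 6" using assms n6_cases by blast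
  show ?thesis unfolding fil_def n using assms(2) n by (simp add: bform_ind1 ac_simps)
qed

lemma orth_gen:
  assumes n6: "6 \<le> n" and Q: "Qc gs i k \<le> n - 6" and x: "x \<in> Gen n t i gs k"
    and y: "Ceq n t i 4 y"
  shows "bform n x y = 0"
proof -
  have e1: "y (2*n-4) = t * y n + y 2 - y n" and e2: "y (2*n-2) = y 0 - t * y n + y (n-2) - y 2 + y n"
    using y unfolding Ceq_def by auto
  have ddz: "bform n (dd n) y = 0"
    unfolding bform_dd[OF n6] by (subst e1, subst e2, simp add: algebra_simps)
  { assume "x \<in> core n t i k" "x \<noteq> dd n"
    then have ?thesis using y unfolding core_def Ceq_def
      by (auto simp: bform_vv bform_cp bform_cb bform_zz n6 algebra_simps) }
  moreover
  { fix r assume r: "r \<in> {1..Qc gs i k}" "x = fil n r"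
    have yall: "\<forall>j. 4 \<le> j \<and> j < n-2 \<longrightarrow> y j = 0" using y unfolding Ceq_def by blast
    have rr: "4 \<le> r+3 \<and> r+3 < n-2" "r \<le> n - 6" using r Q n6 by auto
    then have "y (r+3) = 0" using yall by blast
    moreover have "bform n x y = y (r+3)" using r(2) bform_fil[OF n6 rr(2)] by simp
    ultimately have ?thesis by simp }
  ultimately show ?thesis using x ddz unfolding Gen_def by blast
qed

lemma bform_zero_coords: "(\<forall>k<2*n. u k = 0 \<or> v (2*n-1-k) = 0) \<Longrightarrow> bform n u v = 0"
  unfolding bform_def by (rule sum.neutral) auto

lemma subspace_orth: "fv.subspace {x. bform n x y = 0}"
  unfolding fv.subspace_def by (auto simp: bform_add1 bform_scl1 bform_zero1)

lemma span_orth: "(\<forall>x\<in>B. bform n x y = 0) \<Longrightarrow> x \<in> fv.span B \<Longrightarrow> bform n x y = 0"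
  using fv.span_minimal[OF _ subspace_orth, of B n y] by blast

lemma Cc_iso:
  assumes n6: "6 \<le> n" and Q: "Qc gs i 4 \<le> n - 6"
  shows "isotropic n (Cc n t i gs 4)"
  unfolding isotropic_def
proof (intro ballI)
  fix u v assume u: "u \<in> Cc n t i gs 4" and v: "v \<in> Cc n t i gs 4"
  have "Ceq n t i 4 v" by (rule Cc_Ceq[OF n6 Q v])
  then have "\<forall>x\<in>Gen n t i gs 4. bform n x v = 0" using orth_gen[OF n6 Q] by blast
  then show "bform n u v = 0" using span_orth u unfolding Cc_def by blast
qed

definition Wsp :: "nat \<Rightarrow> (nat \<Rightarrow> 'a::field) set" where "Wsp n = fv.span (set (map ind [0..<n]))"
definition Usp :: "nat \<Rightarrow> nat \<Rightarrow> (nat \<Rightarrow> 'a::field) set" where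
  "Usp n b = fv.span (set (map ind [2*n-b..<2*n]))"

lemma Wsp_coord: "w \<in> Wsp n \<Longrightarrow> n \<le> j \<Longrightarrow> w j = 0"
  using span_coord[of "set (map ind [0..<n])" "{n..}" w] unfolding Wsp_def by auto
lemma Usp_coord: "u \<in> Usp n b \<Longrightarrow> j < 2*n-b \<Longrightarrow> u j = 0"
  using span_coord[of "set (map ind [2*n-b..<2*n])" "{..<2*n-b}" u] unfolding Usp_def by auto
lemma ind_W: "j < n \<Longrightarrow> ind j \<in> Wsp n"
  unfolding Wsp_def by (rule fv.span_base) auto
lemma ind_U: "2*n-b \<le> j \<Longrightarrow> j < 2*n \<Longrightarrow> ind j \<in> Usp n b"
  unfolding Usp_def by (rule fv.span_base) auto

lemma span_Vsp: "B \<subseteq> Vsp n \<Longrightarrow> fv.span B \<subseteq> Vsp n"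
  using fv.span_minimal[OF _ Vsp_subspace] by blast
lemma ind_Vsp: "j < 2*n \<Longrightarrow> ind j \<in> Vsp n" by (auto simp: Vsp_def)

lemma Wsp_Vsp: "Wsp n \<subseteq> Vsp n" unfolding Wsp_def by (rule span_Vsp) (auto simp: ind_Vsp)
lemma Usp_Vsp: "Usp n b \<subseteq> Vsp n" unfolding Usp_def by (rule span_Vsp) (auto simp: ind_Vsp)

lemma dim_list: "tri xs \<Longrightarrow> sdim (fv.span (set xs)) = length xs"
  using tri_indep[of xs] fv.dim_span_eq_card_independent distinct_card by (metis sdim_eq)

lemma tri_map_ind: "distinct ks \<Longrightarrow> tri (map ind ks :: (nat \<Rightarrow> 'a::field) list)"
  using tri_inds[of ks "[]"] by simp

lemma Wsp_dim: "sdim (Wsp n :: (nat \<Rightarrow> 'a::field) set) = n"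
  unfolding Wsp_def using dim_list[OF tri_map_ind[of "[0..<n]"]] by simp
lemma Usp_dim: "b \<le> 2*n \<Longrightarrow> sdim (Usp n b :: (nat \<Rightarrow> 'a::field) set) = b"
  unfolding Usp_def using dim_list[OF tri_map_ind[of "[2*n-b..<2*n]"]] by simp

lemma Wsp_iso: "isotropic n (Wsp n)"
  unfolding isotropic_def
proof (intro ballI bform_zero_coords allI impI)
  fix u v :: "nat \<Rightarrow> 'a" and k assume uv: "u \<in> Wsp n" "v \<in> Wsp n" and k: "k < 2*n"
  show "u k = 0 \<or> v (2*n-1-k) = 0"
  proof (cases "n \<le> k")
    case True then show ?thesis using Wsp_coord[OF uv(1)] by blast
  next
    case False then show ?thesis using Wsp_coord[OF uv(2), of "2*n-1-k"] by auto
  qed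
qed
lemma Usp_iso: assumes "b \<le> n" shows "isotropic n (Usp n b)"
  unfolding isotropic_def
proof (intro ballI bform_zero_coords allI impI)
  fix u v :: "nat \<Rightarrow> 'a" and k assume uv: "u \<in> Usp n b" "v \<in> Usp n b" and k: "k < 2*n"
  show "u k = 0 \<or> v (2*n-1-k) = 0"
  proof (cases "k < 2*n-b")
    case True then show ?thesis using Usp_coord[OF uv(1)] by blast
  next
    case False then show ?thesis using Usp_coord[OF uv(2), of "2*n-1-k"] assms k by auto
  qed
qed

definition BL :: "nat \<Rightarrow> 'a::field \<Rightarrow> nat \<Rightarrow> (nat \<Rightarrow> 'a) list" where
  "BL n t Q = [vv n t, dd n, cp n, cb n, zz n] @ map (fil n) [1..<Q+1]"

lemma tri_BL: assumes n6: "6 \<le> n" and Q: "Q \<le> n - 6" shows "tri (BL n t Q)"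
proof -
  obtain N where n: "n = N + 6" using n6 n6_cases by blast
  have fils: "map (fil n) [1..<Q+1] = (map ind (map (\<lambda>r. 2*n-4-r) [1..<Q+1]) :: (nat \<Rightarrow> 'a) list)"
    by (simp add: fil_def)
  have d: "distinct (map (\<lambda>r. 2*n-4-r) [1..<Q+1])"
    using Q n by (auto simp: distinct_map inj_on_def)
  have tf: "tri (map (fil n) [1..<Q+1] :: (nat \<Rightarrow> 'a) list)" by (subst fils) (rule tri_map_ind[OF d])
  have fz: "\<forall>y\<in>set (map (fil n) [1..<Q+1]). (y::nat\<Rightarrow>'a) k = 0" if "k < n + 2 \<or> 2*n - 4 \<le> k" for k
    using that Q n by (auto simp: fil_apply)
  show ?thesis unfolding BL_def
    apply (simp only: append_Cons tri.simps)
    apply (intro conjI)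
    apply (rule exI[of _ n]) using fz[of n] n apply (simp add: vec_apply)
    apply (rule exI[of _ "2*n-1"]) using fz[of "2*n-1"] n apply (simp add: vec_apply)
    apply (rule exI[of _ 2]) using fz[of 2] n apply (simp add: vec_apply)
    apply (rule exI[of _ 0]) using fz[of 0] n apply (simp add: vec_apply)
    apply (rule exI[of _ "n-2"]) using fz[of "n-2"] n apply (simp add: vec_apply)
    using tf by simp
qed

lemma Gen_sub_BL: "Qc gs i k \<le> Q \<Longrightarrow> Gen n t i gs k \<subseteq> set (BL n t Q)"
  by (auto simp: Gen_def core_def BL_def)

lemma Gen_finite: "finite (Gen n t i gs k)"
  by (rule finite_subset[OF Gen_sub_BL[OF order_refl]]) simp

lemma card_Gen:
  assumes n6: "6 \<le> n" and Q: "Qc gs i k \<le> n - 6"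
  shows "card (Gen n t i gs k) = (if 1 \<le> k then 1 else 0) + (if i \<le> k then 1 else 0) + (if 2 \<le> k then 1 else 0)
          + (if 3 \<le> k then 1 else 0) + (if 4 \<le> k then 1 else 0) + Qc gs i k"
proof -
  let ?Q = "Qc gs i k"
  let ?G = "Gen n t i gs k"
  let ?F = "map (fil n) [1..<?Q+1] :: (nat \<Rightarrow> 'a) list"
  have dist: "distinct (BL n t ?Q)" using tri_indep[OF tri_BL[OF n6 Q]] by blast
  then have nd: "vv n t \<noteq> dd n" "vv n t \<noteq> cp n" "vv n t \<noteq> cb n" "vv n t \<noteq> zz n"
     "(dd n :: nat \<Rightarrow> 'a) \<noteq> cp n" "(dd n :: nat \<Rightarrow> 'a) \<noteq> cb n" "(dd n :: nat \<Rightarrow> 'a) \<noteq> zz n"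
     "(cp n :: nat \<Rightarrow> 'a) \<noteq> cb n" "(cp n :: nat \<Rightarrow> 'a) \<noteq> zz n" "(cb n :: nat \<Rightarrow> 'a) \<noteq> zz n"
     "vv n t \<notin> set ?F" "dd n \<notin> set ?F" "cp n \<notin> set ?F" "cb n \<notin> set ?F" "zz n \<notin> set ?F"
     "distinct ?F"
    unfolding BL_def by (simp_all only: distinct.simps set_append set_simps distinct_append) blast+
  have setF: "set ?F = fil n ` {1..?Q}" by auto
  have m1: "vv n t \<in> ?G \<longleftrightarrow> 1 \<le> k" using nd unfolding Gen_def core_def setF[symmetric] by auto
  have m2: "dd n \<in> ?G \<longleftrightarrow> i \<le> k" using nd unfolding Gen_def core_def setF[symmetric] by auto
  have m3: "cp n \<in> ?G \<longleftrightarrow> 2 \<le> k" using nd unfolding Gen_def core_def setF[symmetric] by auto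
  have m4: "cb n \<in> ?G \<longleftrightarrow> 3 \<le> k" using nd unfolding Gen_def core_def setF[symmetric] by auto
  have m5: "zz n \<in> ?G \<longleftrightarrow> 4 \<le> k" using nd unfolding Gen_def core_def setF[symmetric] by auto
  have ff: "filter (\<lambda>x. x \<in> ?G) ?F = ?F"
    by (rule filter_True) (auto simp: Gen_def)
  have eq: "?G = set (filter (\<lambda>x. x \<in> ?G) (BL n t ?Q))"
    using Gen_sub_BL[of gs i k ?Q n t] by auto
  have "card ?G = length (filter (\<lambda>x. x \<in> ?G) (BL n t ?Q))"
    by (subst eq, rule distinct_card) (simp add: dist)
  also have "\<dots> = (if 1 \<le> k then 1 else 0) + (if i \<le> k then 1 else 0) + (if 2 \<le> k then 1 else 0)
          + (if 3 \<le> k then 1 else 0) + (if 4 \<le> k then 1 else 0) + ?Q"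
    unfolding BL_def filter_append length_append ff
    by (simp only: filter.simps m1 m2 m3 m4 m5) (simp split: if_split)
  finally show ?thesis .
qed

lemma Vsp_add: "u \<in> Vsp n \<Longrightarrow> v \<in> Vsp n \<Longrightarrow> u + v \<in> Vsp n" by (simp add: Vsp_def)
lemma Vsp_diff: "u \<in> Vsp n \<Longrightarrow> v \<in> Vsp n \<Longrightarrow> u - v \<in> Vsp n" by (simp add: Vsp_def)
lemma Vsp_scl: "u \<in> Vsp n \<Longrightarrow> scl c u \<in> Vsp n" by (simp add: Vsp_def scl_apply)

lemma Gen_Vsp: assumes n6: "6 \<le> n" and Q: "Qc gs i k \<le> n - 6" shows "Gen n t i gs k \<subseteq> Vsp n"
proof -
  have "vv n t \<in> Vsp n" unfolding vv_def using n6
    by (intro Vsp_add Vsp_scl ind_Vsp) auto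
  moreover have "dd n \<in> Vsp n" unfolding dd_def using n6
    by (intro Vsp_add Vsp_diff ind_Vsp) auto
  moreover have "cp n \<in> Vsp n" unfolding cp_def using n6
    by (intro Vsp_add ind_Vsp) auto
  moreover have "cb n \<in> Vsp n" unfolding cb_def using n6
    by (intro Vsp_add ind_Vsp) auto
  moreover have "zz n \<in> Vsp n" unfolding zz_def using n6
    by (intro Vsp_add ind_Vsp) auto
  moreover have "fil n r \<in> Vsp n" if "1 \<le> r" for r unfolding fil_def using n6 that
    by (intro ind_Vsp) auto
  ultimately show ?thesis unfolding Gen_def core_def by auto
qed

lemma Gen_mono: "k \<le> k' \<Longrightarrow> Qc gs i k \<le> Qc gs i k' \<Longrightarrow> Gen n t i gs k \<subseteq> Gen n t i gs k'"
  unfolding Gen_def core_def by auto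

definition cfg :: "nat \<Rightarrow> nat \<Rightarrow> 'a::field \<Rightarrow> nat \<Rightarrow> nat list \<Rightarrow>
   (nat \<Rightarrow> 'a) set list \<times> (nat \<Rightarrow> 'a) set list \<times> (nat \<Rightarrow> 'a) set list" where
  "cfg n b t i gs = ([Wsp n], [Usp n b], map (Cc n t i gs) [1..<5])"

locale prm =
  fixes n b g1 g2 g3 g4 i :: nat
  assumes b4: "4 \<le> b" and bn: "b \<le> n - 2" and gp1: "0 < g1" and gp2: "0 < g2" and gp3: "0 < g3"
    and gp4: "0 < g4" and gsum: "g1 + g2 + g3 + g4 < n" and i1: "1 \<le> i" and i4: "i \<le> 4"
    and gi: "(i = 1 \<longrightarrow> 2 \<le> g1) \<and> (i = 2 \<longrightarrow> 2 \<le> g2) \<and> (i = 3 \<longrightarrow> 2 \<le> g3) \<and> (i = 4 \<longrightarrow> 2 \<le> g4)"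
begin

lemma n6: "6 \<le> n" using b4 bn by linarith

lemma k_cases: "k \<le> 4 \<Longrightarrow> k = 0 \<or> k = 1 \<or> k = 2 \<or> k = 3 \<or> k = (4::nat)" by arith

lemma Qc_bound: assumes "k \<le> 4" shows "Qc [g1,g2,g3,g4] i k \<le> n - 6"
proof -
  have "k = 0 \<or> k = 1 \<or> k = 2 \<or> k = 3 \<or> k = 4" using assms by arith
  then show ?thesis
  proof (elim disjE)
    assume "k = 0" then show ?thesis by (simp add: Qc_def)
  next
    assume "k = 1" then show ?thesis using gsum gp1 gp2 gp3 gp4 gi i1 i4 by (simp add: Qc_def) arith
  next
    assume "k = 2" then show ?thesis using gsum gp1 gp2 gp3 gp4 gi i1 i4 by (simp add: Qc_def) arith
  next
    assume "k = 3" then show ?thesis using gsum gp1 gp2 gp3 gp4 gi i1 i4 by (simp add: Qc_def) arith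
  next
    assume "k = 4" then show ?thesis using gsum gp1 gp2 gp3 gp4 gi i1 i4 by (simp add: Qc_def)
  qed
qed

end




context prm begin

abbreviation "gs \<equiv> [g1, g2, g3, g4]"

lemma Qc_suc: assumes "k < 4" shows "Qc gs i k \<le> Qc gs i (Suc k)"
proof -
  have "k = 0 \<or> k = 1 \<or> k = 2 \<or> k = 3" using assms by arith
  then show ?thesis using gp1 gp2 gp3 gp4 gi i1 i4
    by (elim disjE) (simp_all add: Qc_def, arith+)
qed

lemma card_sum: assumes "1 \<le> k" "k \<le> 4"
  shows "(if 1 \<le> k then 1 else 0) + (if i \<le> k then 1 else 0) + (if 2 \<le> k then 1 else 0)
          + (if 3 \<le> k then 1 else 0) + (if 4 \<le> k then 1 else 0) + Qc gs i k = sum_list (take k gs)"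
proof -
  have "k = 1 \<or> k = 2 \<or> k = 3 \<or> k = 4" using assms by arith
  then show ?thesis using gp1 gp2 gp3 gp4 gi i1 i4
    by (elim disjE) (simp_all add: Qc_def, arith+)
qed

lemma Cc_dim: assumes "1 \<le> k" "k \<le> 4" shows "sdim (Cc n t i gs k) = sum_list (take k gs)"
proof -
  have Q: "Qc gs i k \<le> n - 6" using Qc_bound assms by simp
  have ind: "fv.independent (Gen n t i gs k)"
    using fv.independent_mono[OF conjunct1[OF tri_indep[OF tri_BL[OF n6 Q]]] Gen_sub_BL[OF order_refl]] by blast
  have "sdim (Cc n t i gs k) = card (Gen n t i gs k)"
    unfolding Cc_def sdim_eq using fv.dim_span_eq_card_independent[OF ind] .
  also have "\<dots> = sum_list (take k gs)" using card_Gen[OF n6 Q] card_sum[OF assms] by simp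
  finally show ?thesis .
qed

lemma Cc_subsp: assumes "k \<le> 4" shows "is_subspace n (Cc n t i gs k)"
  unfolding is_subspace_def Cc_def
  using span_Vsp[OF Gen_Vsp[OF n6 Qc_bound[OF assms]]] by simp

lemma Cc_nested: assumes "k < 4" shows "Cc n t i gs k \<subseteq> Cc n t i gs (Suc k)"
  unfolding Cc_def by (rule fv.span_mono, rule Gen_mono) (use Qc_suc[OF assms] in auto)

lemma cfg_in: "cfg n b t i gs \<in> triple_space n [n] [b] gs"
proof -
  have W: "[Wsp n] \<in> flags n [n]"
    unfolding flags_def is_subspace_def Wsp_def
    using Wsp_dim[of n] Wsp_iso[of n] Wsp_Vsp[of n] by (auto simp: Wsp_def)
  have bb: "b \<le> n" "b \<le> 2*n" using bn by auto
  have U: "[Usp n b] \<in> flags n [b]"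
    unfolding flags_def is_subspace_def
    using Usp_dim[OF bb(2)] Usp_iso[OF bb(1)] Usp_Vsp[of n b] by (auto simp: Usp_def)
  have C: "map (Cc n t i gs) [1..<5] \<in> flags n gs"
    unfolding flags_def
  proof (intro CollectI conjI allI impI)
    show "length (map (Cc n t i gs) [1..<5]) = length gs" by simp
  next
    fix j assume j: "j < length gs"
    then have jj: "map (Cc n t i gs) [1..<5] ! j = Cc n t i gs (Suc j)" by simp
    show "is_subspace n (map (Cc n t i gs) [1..<5] ! j)" unfolding jj using Cc_subsp[of "Suc j"] j by simp
    show "sdim (map (Cc n t i gs) [1..<5] ! j) = sum_list (take (Suc j) gs)"
      unfolding jj using Cc_dim[of "Suc j"] j by simp
  next
    fix j assume j: "Suc j < length gs"
    then show "map (Cc n t i gs) [1..<5] ! j \<subseteq> map (Cc n t i gs) [1..<5] ! Suc j"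
      using Cc_nested[of "Suc j"] by (simp add: nth_append)
  next
    have "last (map (Cc n t i gs) [1..<5]) = Cc n t i gs 4" by (simp add: upt_rec numeral_eq_Suc)
    then show "isotropic n (last (map (Cc n t i gs) [1..<5]))"
      using Cc_iso[OF n6 Qc_bound[of 4]] by simp
  qed
  show ?thesis unfolding cfg_def triple_space_def using W U C by simp
qed

end



lemma idx_cases: "6 \<le> (n::nat) \<Longrightarrow> j = 0 \<or> j = 1 \<or> j = 2 \<or> j = 3 \<or> (4 \<le> j \<and> j < n-2) \<or> j = n-2 \<or> j = n-1 \<or> n \<le> j"
  by arith

context prm begin

lemma Y_shape:
  assumes y: "y \<in> Wsp n" and c: "c \<in> Cc n t i gs k" and k: "k \<le> 3" and u: "u \<in> Usp n b" and yc: "y = c - u"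
  shows "y = scl (c 0) (ind 0) + scl (c 2) (pp n) \<and> Ceq n t i k c \<and> c n = 0 \<and> (\<forall>j<2*n-b. y j = c j)"
proof -
  have ce: "Ceq n t i k c" using Cc_Ceq[OF n6 Qc_bound c] k by simp
  have ycj: "\<forall>j<2*n-b. y j = c j" using Usp_coord[OF u] yc by simp
  have nb: "n + 1 < 2*n - b" using bn b4 by arith
  have cn: "c n = 0" using ycj Wsp_coord[OF y, of n] nb by simp
  have cn1: "c (n+1) = 0" using ycj Wsp_coord[OF y, of "n+1"] nb by simp
  have yz: "y j = 0" if "n \<le> j" for j using Wsp_coord[OF y that] .
  have e: "c 1 = 0" "c 3 = 0" "c (n-1) = 0" "\<forall>j. 4 \<le> j \<and> j < n-2 \<longrightarrow> c j = 0" "c (n-2) = c 2"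
  proof -
    have a: "c 1 = - c (2*n-1)" "c 3 = - c (2*n-1)" "c (n+1) = c (2*n-1)" "c (n-1) = 0"
      "\<forall>j. 4 \<le> j \<and> j < n-2 \<longrightarrow> c j = 0" "k < 4 \<longrightarrow> c (n - 2) = c 2 - c n"
      using ce unfolding Ceq_def by blast+
    then show "c 1 = 0" "c 3 = 0" "c (n-1) = 0" "\<forall>j. 4 \<le> j \<and> j < n-2 \<longrightarrow> c j = 0" "c (n-2) = c 2"
      using cn cn1 k by simp_all
  qed
  have y2: "y 2 = c 2" using ycj nb by auto
  have yl: "y j = c j" if "j < n" for j using ycj nb that by auto
  have f: "n - 2 \<noteq> 0" "n - 2 \<noteq> 1" "n - 2 \<noteq> 2" "n - 2 \<noteq> 3" "n - 1 \<noteq> n - 2" "n - 2 < n" "n - 1 < n" "n - 1 \<noteq> 2" "n - 1 \<noteq> 0"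
    using n6 by arith+
  have y0: "y 0 = c 0" using ycj nb by auto
  have pw: "y j = c 0 * ind 0 j + c 2 * pp n j" for j
  proof -
    consider "j = 0" | "j = 1" | "j = 2" | "j = 3" | "4 \<le> j \<and> j < n-2" | "j = n-2" | "j = n-1" | "n \<le> j"
      using idx_cases[OF n6, of j] by argo
    then show ?thesis
    proof cases
      case 1 then show ?thesis using f y0 by (simp add: pp_apply)
    next
      case 2 then show ?thesis using f yl[of 1] e n6 by (simp add: pp_apply)
    next
      case 3 then show ?thesis using f y2 by (simp add: pp_apply)
    next
      case 4 then show ?thesis using f yl[of 3] e n6 by (simp add: pp_apply)
    next
      case 5
      then have "j \<noteq> 0" "j \<noteq> 2" "j \<noteq> n-2" "j < n" by auto
      then show ?thesis using 5 yl[of j] e by (simp add: pp_apply)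
    next
      case 6 then show ?thesis using f yl[of "n-2"] e by (simp add: pp_apply)
    next
      case 7 then show ?thesis using f yl[of "n-1"] e n6 by (simp add: pp_apply)
    next
      case 8
      then have "j \<noteq> 0" "j \<noteq> 2" "j \<noteq> n-2" using n6 by auto
      then show ?thesis using 8 yz by (simp add: pp_apply)
    qed
  qed
  have "y = scl (c 0) (ind 0) + scl (c 2) (pp n)"
  proof (rule ext)
    fix j show "y j = (scl (c 0) (ind 0) + scl (c 2) (pp n)) j"
      unfolding plus_fun_def scl_apply by (rule pw)
  qed
  then show ?thesis using ce cn ycj by blast
qed

lemma perpU_coord:
  assumes r: "\<forall>u\<in>Usp n b. bform n r u = 0" and j: "j < b"
  shows "r j = 0"
proof -
  have bb: "b \<le> n" using bn by arith
  have "ind (2*n-1-j) \<in> Usp n b" using j bb by (intro ind_U) auto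
  then have "bform n r (ind (2*n-1-j)) = 0" using r by blast
  moreover have "bform n r (ind (2*n-1-j)) = r j" using j bb by (simp add: bform_ind2)
  ultimately show ?thesis by simp
qed

lemma L1:
  assumes y: "y \<in> Wsp n" and c: "c \<in> Cc n t i gs 2" and u: "u \<in> Usp n b" and yc: "y = c - u"
  shows "\<exists>a. y = scl a (pp n)"
proof -
  have sh: "y = scl (c 0) (ind 0) + scl (c 2) (pp n)" "Ceq n t i 2 c" "c n = 0"
    using Y_shape[OF y c _ u yc] by auto
  have "c 0 = 0" using sh(2,3) unfolding Ceq_def by simp
  then have "y = scl (c 2) (pp n)" using sh(1) by (simp add: fun_eq_iff scl_apply)
  then show ?thesis by blast
qed

lemma L2:
  assumes y: "y \<in> Wsp n" and c: "c \<in> Cc n t i gs 3" and u: "u \<in> Usp n b" and yc: "y = c - u"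
    and perp: "\<forall>x\<in>Cc n t i gs i. bform n y x = 0"
  shows "\<exists>a. y = scl a (ind 0 - pp n)"
proof -
  have sh: "y = scl (c 0) (ind 0) + scl (c 2) (pp n)"
    using Y_shape[OF y c _ u yc] by auto
  have "dd n \<in> Cc n t i gs i" unfolding Cc_def Gen_def core_def by (rule fv.span_base) simp
  then have "bform n y (dd n) = 0" using perp by blast
  then have "bform n (dd n) y = 0" by (simp add: bform_sym)
  then have z: "y 0 - y (2*n-2) + y (n-2) - y (2*n-4) = 0" by (simp add: bform_dd[OF n6])
  have f: "n - 2 \<noteq> 0" "n - 2 \<noteq> 2" "n \<le> 2*n-2" "n \<le> 2*n-4" using n6 by arith+
  have "y 0 = c 0" "y (n-2) = c 2" using sh f by (simp_all add: scl_apply pp_apply)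
  moreover have "y (2*n-2) = 0" "y (2*n-4) = 0" using Wsp_coord[OF y] f by auto
  ultimately have "c 0 + c 2 = 0" using z by (simp add: algebra_simps)
  then have "c 2 = - c 0" by (simp add: eq_neg_iff_add_eq_0 add.commute)
  then have "y = scl (c 0) (ind 0 - pp n)" using sh by (simp add: fun_eq_iff scl_apply algebra_simps)
  then show ?thesis by blast
qed

lemma L3:
  assumes y: "y \<in> Wsp n" and c: "c \<in> Cc n t i gs 3" and u: "u \<in> Usp n b" and yc: "y = c - u"
    and c1: "c1 \<in> Cc n t i gs 1" and r: "\<forall>u\<in>Usp n b. bform n r u = 0" and yr: "y = c1 + r"
  shows "\<exists>a. y = scl a (scl t (ind 0) + pp n)"
proof -
  have sh: "y = scl (c 0) (ind 0) + scl (c 2) (pp n)" "\<forall>j<2*n-b. y j = c j"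
    using Y_shape[OF y c _ u yc] by auto
  have ce: "Ceq n t i 1 c1" using Cc_Ceq[OF n6 Qc_bound c1] by simp
  have r0: "r 0 = 0" "r 2 = 0" using perpU_coord[OF r] b4 by auto
  have nb: "2 < 2*n-b" using bn b4 by arith
  have "y 0 = c 0" "y 2 = c 2" using sh(2) nb by auto
  moreover have "y 0 = c1 0 + r 0" "y 2 = c1 2 + r 2" using yr by simp_all
  ultimately have "c 0 = c1 0" "c 2 = c1 2" using r0 by auto
  moreover have "c1 2 = c1 n" "c1 0 = t * c1 n" using ce unfolding Ceq_def by auto
  ultimately have "y = scl (c1 n) (scl t (ind 0) + pp n)" using sh(1)
    by (simp add: fun_eq_iff scl_apply algebra_simps)
  then show ?thesis by blast
qed

lemma L4:
  assumes y: "y \<in> Wsp n" and c: "c \<in> Cc n t i gs 3" and u: "u \<in> Usp n b" and yc: "y = c - u"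
    and z: "z \<in> Wsp n" "z \<in> Cc n t i gs 4" and r: "\<forall>u\<in>Usp n b. bform n r u = 0" and yr: "y = z + r"
  shows "\<exists>a. y = scl a (ind 0)"
proof -
  have sh: "y = scl (c 0) (ind 0) + scl (c 2) (pp n)" "\<forall>j<2*n-b. y j = c j"
    using Y_shape[OF y c _ u yc] by auto
  have ce: "Ceq n t i 4 z" using Cc_Ceq[OF n6 Qc_bound z(2)] by simp
  have f: "n \<le> 2*n-4" using n6 by arith
  have zz0: "z n = 0" "z (2*n-4) = 0" using Wsp_coord[OF z(1)] f by auto
  have "z 2 = 0" using ce zz0 unfolding Ceq_def by simp
  moreover have "r 2 = 0" using perpU_coord[OF r] b4 by auto
  moreover have nb: "2 < 2*n-b" using bn b4 by arith
  moreover have "y 2 = c 2" using sh(2) nb by auto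
  moreover have "y 2 = z 2 + r 2" using yr by simp
  ultimately have "c 2 = 0" by simp
  then have "y = scl (c 0) (ind 0)" using sh(1) by (simp add: fun_eq_iff scl_apply)
  then show ?thesis by blast
qed

lemma vec_ids:
  shows "pp n = cp n - ind (2*n-4)" "(ind 0 :: nat \<Rightarrow> 'a::field) = cb n - ind (2*n-2)"
    "(ind 0 :: nat \<Rightarrow> 'a::field) = (cb n - zz n) + ind (n-2)"
    "(cb n - zz n :: nat \<Rightarrow> 'a::field) = ind 0 - ind (n-2)"
    "(ind 0 - pp n :: nat \<Rightarrow> 'a::field) = (cb n - cp n) - (ind (2*n-2) - ind (2*n-4))"
    "scl s (ind 0) + pp n = (scl s (cb n) + cp n) - (scl s (ind (2*n-2)) + ind (2*n-4))"
    "scl s (ind 0) + pp n = vv n s + (ind (n-2) - scl s (ind (2*n-4)) - ind n)"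
proof -
  obtain N where n: "n = N + 6" using n6 n6_cases by blast
  show "pp n = cp n - ind (2*n-4)" unfolding n by (rule ext) (simp add: vec_apply)
  show "(ind 0 :: nat \<Rightarrow> 'a::field) = cb n - ind (2*n-2)" unfolding n by (rule ext) (simp add: vec_apply)
  show "(ind 0 :: nat \<Rightarrow> 'a::field) = (cb n - zz n) + ind (n-2)" unfolding n by (rule ext) (simp add: vec_apply)
  show "(cb n - zz n :: nat \<Rightarrow> 'a::field) = ind 0 - ind (n-2)" unfolding n by (rule ext) (simp add: vec_apply)
  show "(ind 0 - pp n :: nat \<Rightarrow> 'a::field) = (cb n - cp n) - (ind (2*n-2) - ind (2*n-4))"
    unfolding n by (rule ext) (simp add: vec_apply)
  show "scl s (ind 0) + pp n = (scl s (cb n) + cp n) - (scl s (ind (2*n-2)) + ind (2*n-4))"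
    unfolding n by (rule ext) (simp add: vec_apply scl_apply)
  show "scl s (ind 0) + pp n = vv n s + (ind (n-2) - scl s (ind (2*n-4)) - ind n)"
    unfolding n by (rule ext) (simp add: vec_apply scl_apply)
qed

lemma inj_main:
  assumes g: "g \<in> orth_group n" and W: "g ` Wsp n = Wsp n" and U: "g ` Usp n b = Usp n b"
    and C: "\<forall>k\<in>{1,2,3,4}. g ` Cc n s i gs k = Cc n t i gs k"
  shows "s = t"
proof -
  have lin: "Vector_Spaces.linear scl scl g" and bij: "bij_betw g (Vsp n) (Vsp n)"
    and form: "\<forall>u\<in>Vsp n. \<forall>v\<in>Vsp n. bform n (g u) (g v) = bform n u v"
    using g unfolding orth_group_def by auto
  have gadd: "g (x + y) = g x + g y" for x y using lin unfolding Vector_Spaces.linear_iff by blast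
  have gscl: "g (scl c x) = scl c (g x)" for c x using lin unfolding Vector_Spaces.linear_iff by blast
  have gdiff: "g (x - y) = g x - g y" for x y
  proof -
    have "x - y = x + scl (-1) y" by (simp add: fun_eq_iff scl_apply)
    then have "g (x - y) = g (x + scl (-1) y)" by simp
    also have "\<dots> = g x + scl (-1) (g y)" by (simp only: gadd gscl)
    also have "\<dots> = g x - g y" by (simp add: fun_eq_iff scl_apply)
    finally show ?thesis .
  qed
  have g0: "g 0 = 0"
  proof -
    have "(0::nat\<Rightarrow>'a) = scl 0 0" by (simp add: fun_eq_iff scl_apply)
    then show ?thesis using gscl[of 0 0] by (simp add: fun_eq_iff scl_apply)
  qed
  have inj: "inj_on g (Vsp n)" using bij unfolding bij_betw_def by blast
  have gV: "x \<in> Vsp n \<Longrightarrow> g x \<in> Vsp n" for x using bij unfolding bij_betw_def by blast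
  have gW: "x \<in> Wsp n \<Longrightarrow> g x \<in> Wsp n" for x using W by blast
  have gU: "x \<in> Usp n b \<Longrightarrow> g x \<in> Usp n b" for x using U by blast
  have gC: "x \<in> Cc n s i gs k \<Longrightarrow> k \<in> {1,2,3,4} \<Longrightarrow> g x \<in> Cc n t i gs k" for x k using C by blast
  have tU: "\<forall>u\<in>Usp n b. bform n (g x) u = 0" if x: "x \<in> Vsp n" "\<forall>u\<in>Usp n b. bform n x u = 0" for x
  proof
    fix u :: "nat \<Rightarrow> 'a" assume "u \<in> Usp n b"
    then obtain u' where u': "u' \<in> Usp n b" "u = g u'" using U by blast
    then have "u' \<in> Vsp n" using Usp_Vsp by blast
    then show "bform n (g x) u = 0" using form x u' by simp
  qed
  have CsV: "Cc n s i gs k \<subseteq> Vsp n" if "k \<le> 4" for k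
    unfolding Cc_def using span_Vsp[OF Gen_Vsp[OF n6 Qc_bound[OF that]]] .
  have iin: "i \<in> {1,2,3,4}" using i1 i4 by auto
  have tC: "\<forall>c\<in>Cc n t i gs i. bform n (g x) c = 0" if x: "x \<in> Vsp n" "\<forall>c\<in>Cc n s i gs i. bform n x c = 0" for x
  proof
    fix c :: "nat \<Rightarrow> 'a" assume "c \<in> Cc n t i gs i"
    then obtain c' where c': "c' \<in> Cc n s i gs i" "c = g c'" using C iin by blast
    then have "c' \<in> Vsp n" using CsV[of i] i4 by blast
    then show "bform n (g x) c = 0" using form x c' by simp
  qed
  have gen: "x \<in> Gen n s i gs k \<Longrightarrow> x \<in> Cc n s i gs k" for x k unfolding Cc_def by (rule fv.span_base)
  have ff: "n - 2 < n" "2 < n" "0 < n" "2*n-4 < 2*n" "2*n-2 < 2*n" "n - 2 < 2*n" "n < 2*n" "0 < 2*n" "2 < 2*n"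
    "2*n - b \<le> 2*n-4" "2*n - b \<le> 2*n-2" "n + 1 < 2*n - b"
    using n6 b4 bn by arith+
  have indW: "(ind 0 :: nat \<Rightarrow> 'a) \<in> Wsp n" "(ind 2 :: nat \<Rightarrow> 'a) \<in> Wsp n" "(ind (n-2) :: nat \<Rightarrow> 'a) \<in> Wsp n"
    using ind_W[of 0 n] ind_W[of 2 n] ind_W[of "n-2" n] ff by auto
  have ppW: "(pp n :: nat \<Rightarrow> 'a) \<in> Wsp n" unfolding pp_def using indW fv.span_add unfolding Wsp_def by blast
  have indV: "(ind j :: nat \<Rightarrow> 'a) \<in> Vsp n" if "j < 2*n" for j using ind_Vsp that by blast
  have iU: "(ind j :: nat \<Rightarrow> 'a) \<in> Usp n b" if "2*n - b \<le> j" "j < 2*n" for j using ind_U that by blast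
  have WV: "x \<in> Wsp n \<Longrightarrow> x \<in> Vsp n" for x using Wsp_Vsp by blast
  obtain a where ga: "g (pp n) = scl a (pp n)"
  proof -
    have e1: "g (pp n) = g (cp n) - g (ind (2*n-4))" by (subst vec_ids(1)) (rule gdiff)
    have c1: "g (cp n) \<in> Cc n t i gs 2" by (rule gC) (auto intro: gen simp: Gen_def core_def)
    have u1: "g (ind (2*n-4)) \<in> Usp n b" by (rule gU, rule iU) (use n6 b4 bn in arith)+
    have y1: "g (pp n) \<in> Wsp n" using gW ppW by blast
    obtain a' where "g (pp n) = scl a' (pp n)" using L1[OF y1 c1 u1 e1] by blast
    then show ?thesis by (rule that)
  qed
  obtain e where ge: "g (ind 0) = scl e (ind 0)"
  proof -
    have y: "g (ind 0) \<in> Wsp n" using gW indW by blast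
    have e1: "g (ind 0) = g (cb n) - g (ind (2*n-2))" by (subst vec_ids(2)) (rule gdiff)
    have c1: "g (cb n) \<in> Cc n t i gs 3" by (rule gC) (auto intro: gen simp: Gen_def core_def)
    have u1: "g (ind (2*n-2)) \<in> Usp n b" by (rule gU, rule iU) (use n6 b4 bn in arith)+
    have e2: "g (ind 0) = g (cb n - zz n) + g (ind (n-2))" by (subst vec_ids(3)) (rule gadd)
    have w2: "g (cb n - zz n) \<in> Wsp n"
    proof (rule gW)
      show "(cb n - zz n :: nat \<Rightarrow> 'a) \<in> Wsp n" unfolding vec_ids(4) Wsp_def
        by (rule fv.span_diff) (use indW in \<open>auto simp: Wsp_def\<close>)
    qed
    have c2: "g (cb n - zz n) \<in> Cc n t i gs 4"
    proof (rule gC)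
      have "cb n \<in> Cc n s i gs 4" "zz n \<in> Cc n s i gs 4" by (auto intro: gen simp: Gen_def core_def)
      then show "cb n - zz n \<in> Cc n s i gs 4" unfolding Cc_def by (rule fv.span_diff)
    qed simp
    have r2: "\<forall>u\<in>Usp n b. bform n (g (ind (n-2))) u = 0"
    proof (rule tU)
      show "(ind (n-2) :: nat \<Rightarrow> 'a) \<in> Vsp n" using indV ff by blast
      show "\<forall>u\<in>Usp n b. bform n (ind (n - 2) :: nat \<Rightarrow> 'a) u = 0"
      proof
        fix u :: "nat \<Rightarrow> 'a" assume u: "u \<in> Usp n b"
        have h0: "n - 2 < 2*n" "2*n-1-(n-2) = n+1" "n + 1 < 2*n - b" using n6 b4 bn by arith+
        have h1: "bform n (ind (n-2)) u = u (n+1)" using bform_ind1[OF h0(1), of u] h0(2) by simp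
        have h2: "u (n+1) = 0" using Usp_coord[OF u h0(3)] .
        show "bform n (ind (n-2)) u = 0" using h1 h2 by simp
      qed
    qed
    obtain a' where "g (ind 0) = scl a' (ind 0)" using L4[OF y c1 u1 e1 w2 c2 r2 e2] by blast
    then show ?thesis by (rule that)
  qed
  obtain c where gc: "g (ind 0 - pp n) = scl c (ind 0 - pp n)"
  proof -
    have emp: "(ind 0 - pp n :: nat \<Rightarrow> 'a) \<in> Wsp n" using indW ppW fv.span_diff unfolding Wsp_def by blast
    have y: "g (ind 0 - pp n) \<in> Wsp n" using gW emp by blast
    have e1: "g (ind 0 - pp n) = g (cb n - cp n) - g (ind (2*n-2) - ind (2*n-4))" by (subst vec_ids(5)) (rule gdiff)
    have c1: "g (cb n - cp n) \<in> Cc n t i gs 3"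
    proof (rule gC)
      have "cb n \<in> Cc n s i gs 3" "cp n \<in> Cc n s i gs 3" by (auto intro: gen simp: Gen_def core_def)
      then show "cb n - cp n \<in> Cc n s i gs 3" unfolding Cc_def by (rule fv.span_diff)
    qed simp
    have u1: "g (ind (2*n-2) - ind (2*n-4)) \<in> Usp n b"
    proof (rule gU)
      have "(ind (2*n-2) :: nat \<Rightarrow> 'a) \<in> Usp n b" "(ind (2*n-4) :: nat \<Rightarrow> 'a) \<in> Usp n b"
        by (rule iU; use n6 b4 bn in arith)+
      then show "(ind (2*n-2) - ind (2*n-4) :: nat \<Rightarrow> 'a) \<in> Usp n b" unfolding Usp_def by (rule fv.span_diff)
    qed
    have p1: "\<forall>x\<in>Cc n t i gs i. bform n (g (ind 0 - pp n)) x = 0"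
    proof (rule tC)
      show "(ind 0 - pp n :: nat \<Rightarrow> 'a) \<in> Vsp n" using WV emp by blast
      show "\<forall>c\<in>Cc n s i gs i. bform n (ind 0 - pp n) c = 0"
      proof
        fix x :: "nat \<Rightarrow> 'a" assume x: "x \<in> Cc n s i gs i"
        have ce: "Ceq n s i i x" using Cc_Ceq[OF n6 Qc_bound x] i4 by simp
        have "bform n (ind 0 - pp n) x = x (2*n-1) - (x (2*n-3) + x (n+1))"
        proof -
          have "2*n-1-(n-2) = n+1" "2*n-1-2 = 2*n-3" using n6 by arith+
          then show ?thesis unfolding pp_def using ff by (simp add: bform_diff1 bform_add1 bform_ind1)
        qed
        then show "bform n (ind 0 - pp n) x = 0" using ce unfolding Ceq_def by simp
      qed
    qed
    obtain a' where "g (ind 0 - pp n) = scl a' (ind 0 - pp n)" using L2[OF y c1 u1 e1 p1] by blast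
    then show ?thesis by (rule that)
  qed
  obtain k where gk: "g (scl s (ind 0) + pp n) = scl k (scl t (ind 0) + pp n)"
  proof -
    have qW: "scl s (ind 0) + pp n \<in> Wsp n"
      using indW ppW fv.span_add fv.span_scale unfolding Wsp_def by blast
    have y: "g (scl s (ind 0) + pp n) \<in> Wsp n" using gW qW by blast
    have e1: "g (scl s (ind 0) + pp n) = g (scl s (cb n) + cp n) - g (scl s (ind (2*n-2)) + ind (2*n-4))"
      by (subst vec_ids(6)) (rule gdiff)
    have c1: "g (scl s (cb n) + cp n) \<in> Cc n t i gs 3"
    proof (rule gC)
      have "cb n \<in> Cc n s i gs 3" "cp n \<in> Cc n s i gs 3" by (auto intro: gen simp: Gen_def core_def)
      then show "scl s (cb n) + cp n \<in> Cc n s i gs 3" unfolding Cc_def by (intro fv.span_add fv.span_scale)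
    qed simp
    have u1: "g (scl s (ind (2*n-2)) + ind (2*n-4)) \<in> Usp n b"
    proof (rule gU)
      have "(ind (2*n-2) :: nat \<Rightarrow> 'a) \<in> Usp n b" "(ind (2*n-4) :: nat \<Rightarrow> 'a) \<in> Usp n b"
        by (rule iU; use n6 b4 bn in arith)+
      then show "scl s (ind (2*n-2)) + ind (2*n-4) \<in> Usp n b" unfolding Usp_def
        by (intro fv.span_add fv.span_scale)
    qed
    have e2: "g (scl s (ind 0) + pp n) = g (vv n s) + g (ind (n-2) - scl s (ind (2*n-4)) - ind n)"
      by (subst vec_ids(7)) (rule gadd)
    have c2: "g (vv n s) \<in> Cc n t i gs 1"
      by (rule gC) (auto intro: gen simp: Gen_def core_def)
    have r2: "\<forall>u\<in>Usp n b. bform n (g (ind (n-2) - scl s (ind (2*n-4)) - ind n)) u = 0"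
    proof (rule tU)
      show "ind (n-2) - scl s (ind (2*n-4)) - ind n \<in> Vsp n"
        using indV ff by (intro Vsp_diff Vsp_scl) auto
      show "\<forall>u\<in>Usp n b. bform n (ind (n-2) - scl s (ind (2*n-4)) - ind n) u = 0"
      proof
        fix u :: "nat \<Rightarrow> 'a" assume u: "u \<in> Usp n b"
        have "2*n-1-(n-2) = n+1" "2*n-1-(2*n-4) = 3" "2*n-1-n = n-1" using n6 by arith+
        then have "bform n (ind (n-2) - scl s (ind (2*n-4)) - ind n) u = u (n+1) - s * u 3 - u (n-1)"
          using ff by (simp add: bform_diff1 bform_scl1 bform_ind1)
        moreover have "3 < 2*n - b" "n - 1 < 2*n - b" using ff by arith+
        ultimately show "bform n (ind (n-2) - scl s (ind (2*n-4)) - ind n) u = 0"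
          using Usp_coord[OF u] ff by simp
      qed
    qed
    obtain a' where "g (scl s (ind 0) + pp n) = scl a' (scl t (ind 0) + pp n)" using L3[OF y c1 u1 e1 c2 r2 e2] by blast
    then show ?thesis by (rule that)
  qed
  have nn: "n - 2 \<noteq> 0" "n - 2 \<noteq> 2" using n6 by arith+
  have p0: "pp n 0 = 0" "pp n 2 = 1" using nn by (simp_all add: pp_apply)
  have "g (ind 0 - pp n) = scl e (ind 0) - scl a (pp n)" using gdiff ge ga by simp
  then have eq1: "scl c (ind 0 - pp n) = scl e (ind 0) - scl a (pp n)" using gc by simp
  have c1: "c = e" using fun_cong[OF eq1, of 0] by (simp add: scl_apply p0)
  have c2: "c = a" using fun_cong[OF eq1, of 2] by (simp add: scl_apply p0)
  have "g (scl s (ind 0) + pp n) = scl s (scl e (ind 0)) + scl a (pp n)" using gadd gscl ge ga by simp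
  then have eq2: "scl k (scl t (ind 0) + pp n) = scl s (scl e (ind 0)) + scl a (pp n)" using gk by simp
  have d1: "k * t = s * e" using fun_cong[OF eq2, of 0] by (simp add: scl_apply p0)
  have d2: "k = a" using fun_cong[OF eq2, of 2] by (simp add: scl_apply p0)
  have "e \<noteq> 0"
  proof
    assume "e = 0"
    then have "g (ind 0) = g 0" using ge g0 by (simp add: fun_eq_iff scl_apply)
    moreover have "(0::nat\<Rightarrow>'a) \<in> Vsp n" by (simp add: Vsp_def)
    ultimately have "ind 0 = (0::nat\<Rightarrow>'a)" using inj indV ff unfolding inj_on_def by blast
    then show False using fun_cong[of "ind 0" 0 0] by simp
  qed
  have ae: "a = e" using c1 c2 by simp
  have "e * t = e * s" using d1 d2 ae by (simp add: mult.commute)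
  then show "s = t" using \<open>e \<noteq> 0\<close> by simp
qed

lemma id_orth: "id \<in> orth_group n"
  unfolding orth_group_def using fv.linear_id by (auto simp: bij_betw_def)

lemma act_id: "act id x = x"
  by (cases x) (simp add: act_def)

lemma orbit_inj:
  assumes eq: "orbit n (cfg n b s i gs) = orbit n (cfg n b (t::'a::field) i gs)"
  shows "s = t"
proof -
  have "cfg n b t i gs \<in> orbit n (cfg n b t i gs)"
    unfolding orbit_def by (intro CollectI exI[of _ id] conjI) (simp_all add: act_id id_orth)
  then have "cfg n b t i gs \<in> orbit n (cfg n b s i gs)" using eq by simp
  then obtain g where g: "g \<in> orth_group n" and ag: "cfg n b t i gs = act g (cfg n b s i gs)"
    unfolding orbit_def by blast
  have u5: "[1..<5] = [1,2,3,4::nat]" by (simp add: upt_rec numeral_eq_Suc)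
  have W: "g ` Wsp n = Wsp n" and U: "g ` Usp n b = Usp n b"
    and C: "g ` Cc n s i gs 1 = Cc n t i gs 1" "g ` Cc n s i gs 2 = Cc n t i gs 2"
           "g ` Cc n s i gs 3 = Cc n t i gs 3" "g ` Cc n s i gs 4 = Cc n t i gs 4"
  proof -
    have "([Wsp n], [Usp n b], map (Cc n t i gs) [1,2,3,4]) =
          ([g ` Wsp n], [g ` Usp n b], map (\<lambda>k. g ` Cc n s i gs k) [1,2,3,4])"
      using ag unfolding cfg_def act_def u5 by (simp only: prod.case list.map)
    then have "Wsp n = g ` Wsp n" "Usp n b = g ` Usp n b"
      "Cc n t i gs 1 = g ` Cc n s i gs 1" "Cc n t i gs 2 = g ` Cc n s i gs 2"
      "Cc n t i gs 3 = g ` Cc n s i gs 3" "Cc n t i gs 4 = g ` Cc n s i gs 4"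
      by (simp_all only: prod.inject list.inject list.map)
    then show "g ` Wsp n = Wsp n" "g ` Usp n b = Usp n b"
      "g ` Cc n s i gs 1 = Cc n t i gs 1" "g ` Cc n s i gs 2 = Cc n t i gs 2"
      "g ` Cc n s i gs 3 = Cc n t i gs 3" "g ` Cc n s i gs 4 = Cc n t i gs 4"
      by (simp_all only: eq_commute)
  qed
  have "\<forall>k\<in>{1,2,3,4}. g ` Cc n s i gs k = Cc n t i gs k" using C by auto
  then show ?thesis using inj_main[OF g W U] by blast
qed

lemma infinite_orbits:
  assumes inf: "infinite (UNIV :: 'a::field set)"
  shows "infinite (orbit n ` triple_space n [n] [b] gs
           :: ((nat \<Rightarrow> 'a) set list \<times> (nat \<Rightarrow> 'a) set list \<times> (nat \<Rightarrow> 'a) set list) set set)"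
proof
  assume fin: "finite (orbit n ` triple_space n [n] [b] gs
           :: ((nat \<Rightarrow> 'a) set list \<times> (nat \<Rightarrow> 'a) set list \<times> (nat \<Rightarrow> 'a) set list) set set)"
  let ?f = "\<lambda>t::'a. orbit n (cfg n b t i gs)"
  have sub: "range ?f \<subseteq> orbit n ` triple_space n [n] [b] gs" using cfg_in by blast
  have "inj ?f" by (rule injI) (rule orbit_inj)
  moreover have "finite (range ?f)" using finite_subset[OF sub fin] .
  ultimately have "finite (UNIV :: 'a set)" using finite_imageD by blast
  then show False using inf by simp
qed

end

theorem proposition3p19:
  fixes n \<beta> \<gamma>1 \<gamma>2 \<gamma>3 \<gamma>4 :: nat
  assumes "infinite (UNIV :: 'a::field set)"
    and "(2::'a) \<noteq> 0"
    and "4 \<le> \<beta>" and "\<beta> \<le> n - 2"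
    and "0 < \<gamma>1" and "0 < \<gamma>2" and "0 < \<gamma>3" and "0 < \<gamma>4"
    and "\<gamma>1 + \<gamma>2 + \<gamma>3 + \<gamma>4 < n"
    and "2 \<le> \<gamma>1 \<or> 2 \<le> \<gamma>2 \<or> 2 \<le> \<gamma>3 \<or> 2 \<le> \<gamma>4"
  shows "infinite (orbit n ` (triple_space n [n] [\<beta>] [\<gamma>1, \<gamma>2, \<gamma>3, \<gamma>4]
           :: ((nat \<Rightarrow> 'a) set list \<times> (nat \<Rightarrow> 'a) set list \<times> (nat \<Rightarrow> 'a) set list) set))"
proof -
  have "\<exists>i::nat. 1 \<le> i \<and> i \<le> 4 \<and> ((i = 1 \<longrightarrow> 2 \<le> \<gamma>1) \<and> (i = 2 \<longrightarrow> 2 \<le> \<gamma>2) \<and> (i = 3 \<longrightarrow> 2 \<le> \<gamma>3) \<and> (i = 4 \<longrightarrow> 2 \<le> \<gamma>4))"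
    using assms(10)
  proof (elim disjE)
    assume "2 \<le> \<gamma>1" then show ?thesis by (intro exI[of _ 1]) simp
  next
    assume "2 \<le> \<gamma>2" then show ?thesis by (intro exI[of _ 2]) simp
  next
    assume "2 \<le> \<gamma>3" then show ?thesis by (intro exI[of _ 3]) simp
  next
    assume "2 \<le> \<gamma>4" then show ?thesis by (intro exI[of _ 4]) simp
  qed
  then obtain i :: nat where i: "1 \<le> i" "i \<le> 4"
    and gi: "(i = 1 \<longrightarrow> 2 \<le> \<gamma>1) \<and> (i = 2 \<longrightarrow> 2 \<le> \<gamma>2) \<and> (i = 3 \<longrightarrow> 2 \<le> \<gamma>3) \<and> (i = 4 \<longrightarrow> 2 \<le> \<gamma>4)"
    by blast
  interpret P: prm n \<beta> \<gamma>1 \<gamma>2 \<gamma>3 \<gamma>4 i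
    by (unfold_locales) (use assms i gi in auto)
  show ?thesis using P.infinite_orbits[OF assms(1)] by simp
qed

end
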